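(* Let $L$ be an ideal lattice and $L'\subseteq L$ a subset such that (i) $\inf A\in L'$ for every $A\subseteq L'$, and (ii) $\sup A\in L'$ for every directed $A\subseteq L'$. Define $\pi\colon L\to L'$ by $\pi(a)=\bigwedge\{a'\in L'\mid a\leq a'\}$ and on $L'$ the product $a\cdot b=\pi(ab)$. Suppose (iii) $\pi(a\pi(b))=\pi(ab)=\pi(\pi(a)b)$ for all $a,b\in L$. Then $L'$, with the partial order induced from $L$ and the product $\cdot$, is an ideal lattice.
   Context: An ideal lattice is a poset $(L,\leq)$ with an associative multiplication such that: (L1) $L$ is a complete lattice; (L2) every element is a supremum of compact elements ($a$ is compact if $a\leq\sup A$ implies $a\leq\sup A'$ for some finite $A'\subseteq A$); (L3) multiplication distributes over binary joins on both sides; (L4) $1=\sup L$ is compact and is a two-sided identity; (L5) products of compact elements are compact. *)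

theory Defs
  imports Main
begin

definition is_lub_in :: "'a::order set \<Rightarrow> 'a set \<Rightarrow> 'a \<Rightarrow> bool" where
  "is_lub_in S A x \<longleftrightarrow> x \<in> S \<and> (\<forall>y\<in>A. y \<le> x) \<and> (\<forall>z\<in>S. (\<forall>y\<in>A. y \<le> z) \<longrightarrow> x \<le> z)"

definition sup_in :: "'a::order set \<Rightarrow> 'a set \<Rightarrow> 'a" where
  "sup_in S A = (THE x. is_lub_in S A x)"

definition compact_in :: "'a::order set \<Rightarrow> 'a \<Rightarrow> bool" where
  "compact_in S a \<longleftrightarrow> a \<in> S \<and>
     (\<forall>A. A \<subseteq> S \<longrightarrow> a \<le> sup_in S A \<longrightarrow> (\<exists>A'. A' \<subseteq> A \<and> finite A' \<and> a \<le> sup_in S A'))"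

definition ideal_lattice_on :: "'a::order set \<Rightarrow> ('a \<Rightarrow> 'a \<Rightarrow> 'a) \<Rightarrow> bool" where
  "ideal_lattice_on S m \<longleftrightarrow>
     (\<forall>a\<in>S. \<forall>b\<in>S. m a b \<in> S) \<and>
     (\<forall>a\<in>S. \<forall>b\<in>S. \<forall>c\<in>S. m (m a b) c = m a (m b c)) \<and>
     \<comment> \<open>L1\<close>
     (\<forall>A. A \<subseteq> S \<longrightarrow> (\<exists>x. is_lub_in S A x)) \<and>
     \<comment> \<open>L2\<close>
     (\<forall>a\<in>S. \<exists>C. C \<subseteq> S \<and> (\<forall>c\<in>C. compact_in S c) \<and> a = sup_in S C) \<and>
     \<comment> \<open>L3\<close>
     (\<forall>a\<in>S. \<forall>b\<in>S. \<forall>c\<in>S.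
        m a (sup_in S {b, c}) = sup_in S {m a b, m a c} \<and>
        m (sup_in S {b, c}) a = sup_in S {m b a, m c a}) \<and>
     \<comment> \<open>L4\<close>
     compact_in S (sup_in S S) \<and>
     (\<forall>a\<in>S. m (sup_in S S) a = a \<and> m a (sup_in S S) = a) \<and>
     \<comment> \<open>L5\<close>
     (\<forall>a\<in>S. \<forall>b\<in>S. compact_in S a \<longrightarrow> compact_in S b \<longrightarrow> compact_in S (m a b))"

definition directed_set :: "'a::order set \<Rightarrow> bool" where
  "directed_set A \<longleftrightarrow> A \<noteq> {} \<and> (\<forall>x\<in>A. \<forall>y\<in>A. \<exists>z\<in>A. x \<le> z \<and> y \<le> z)"

end

theory Submission
  imports Defs
begin

lemma lub_unique:
  assumes "is_lub_in S A x" "is_lub_in S A y" shows "x = y"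
  using assms unfolding is_lub_in_def by (blast intro: order.antisym)

lemma sup_in_eq:
  assumes "is_lub_in S A x" shows "sup_in S A = x"
  unfolding sup_in_def using assms lub_unique by blast

lemma lub_univ: "is_lub_in (UNIV::'a::complete_lattice set) A (Sup A)"
  unfolding is_lub_in_def by (auto intro: Sup_upper Sup_least)

lemma sup_univ: "sup_in (UNIV::'a::complete_lattice set) A = Sup A"
  by (rule sup_in_eq[OF lub_univ])

lemma compact_univ:
  "compact_in (UNIV::'a::complete_lattice set) a \<longleftrightarrow>
     (\<forall>A. a \<le> Sup A \<longrightarrow> (\<exists>A'. A' \<subseteq> A \<and> finite A' \<and> a \<le> Sup A'))"
  unfolding compact_in_def sup_univ by auto

lemma finite_Sup_compact:
  fixes C :: "'a::complete_lattice set"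
  assumes "finite C" "\<forall>c\<in>C. compact_in UNIV c"
  shows "compact_in UNIV (Sup C)"
  using assms
proof (induction C rule: finite_induct)
  case empty
  then show ?case unfolding compact_univ by (intro allI impI exI[of _ "{}"]) auto
next
  case (insert x F)
  have cx: "compact_in UNIV x" and cF: "compact_in UNIV (Sup F)" using insert by auto
  show ?case unfolding compact_univ
  proof (intro allI impI)
    fix A assume h: "Sup (insert x F) \<le> Sup A"
    have "x \<le> Sup A" using Sup_upper[OF insertI1, of x F] h by (rule order_trans)
    then obtain A1 where A1: "A1 \<subseteq> A" "finite A1" "x \<le> Sup A1" using cx unfolding compact_univ by blast
    have "Sup F \<le> Sup A" using Sup_subset_mono[OF subset_insertI, of F x] h by (rule order_trans)
    then obtain A2 where A2: "A2 \<subseteq> A" "finite A2" "Sup F \<le> Sup A2" using cF unfolding compact_univ by blast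
    have "Sup (insert x F) \<le> Sup (A1 \<union> A2)"
      using A1 A2 by (simp add: Sup_union_distrib le_supI1 le_supI2)
    then show "\<exists>A'\<subseteq>A. finite A' \<and> Sup (insert x F) \<le> Sup A'"
      using A1 A2 by (intro exI[of _ "A1 \<union> A2"]) auto
  qed
qed

locale ctx12 =
  fixes m :: "'a::complete_lattice \<Rightarrow> 'a \<Rightarrow> 'a"
    and L' :: "'a set"
    and \<pi> :: "'a \<Rightarrow> 'a"
  assumes L: "ideal_lattice_on (UNIV :: 'a set) m"
    and inf_closed: "\<forall>A. A \<subseteq> L' \<longrightarrow> Inf A \<in> L'"
    and dir_closed: "\<forall>A. A \<subseteq> L' \<longrightarrow> directed_set A \<longrightarrow> Sup A \<in> L'"
    and pi_def: "\<forall>a. \<pi> a = Inf {a' \<in> L'. a \<le> a'}"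
    and compat: "\<forall>a b. \<pi> (m a (\<pi> b)) = \<pi> (m a b) \<and> \<pi> (m a b) = \<pi> (m (\<pi> a) b)"
begin

lemmas Lu = L[unfolded ideal_lattice_on_def sup_univ Sup_UNIV]

lemma m_assoc: "m (m a b) c = m a (m b c)"
  using conjunct1[OF conjunct2[OF Lu]] by simp

lemma m_distr: "m a (sup b c) = sup (m a b) (m a c)" "m (sup b c) a = sup (m b a) (m c a)"
  using conjunct1[OF conjunct2[OF conjunct2[OF conjunct2[OF conjunct2[OF Lu]]]]] by simp_all

lemma top_compact: "compact_in UNIV (top::'a)"
  using conjunct1[OF conjunct2[OF conjunct2[OF conjunct2[OF conjunct2[OF conjunct2[OF Lu]]]]]] .

lemma m_top: "m top a = a" "m a top = a"
  using conjunct1[OF conjunct2[OF conjunct2[OF conjunct2[OF conjunct2[OF conjunct2[OF conjunct2[OF Lu]]]]]]] by simp_all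

lemma m_compact: "compact_in UNIV a \<Longrightarrow> compact_in UNIV b \<Longrightarrow> compact_in UNIV (m a b)"
  using conjunct2[OF conjunct2[OF conjunct2[OF conjunct2[OF conjunct2[OF conjunct2[OF conjunct2[OF Lu]]]]]]] by simp

lemma L2: "\<exists>C. (\<forall>c\<in>C. compact_in UNIV c) \<and> (a::'a) = Sup C"
proof -
  obtain C where C: "C \<subseteq> UNIV" "\<forall>c\<in>C. compact_in UNIV c" "a = Sup C"
    using bspec[OF conjunct1[OF conjunct2[OF conjunct2[OF conjunct2[OF Lu]]]] UNIV_I, of a]
    by (elim exE conjE)
  show ?thesis by (rule exI[of _ C], rule conjI, fact C(2), fact C(3))
qed

lemma pi_in: "\<pi> a \<in> L'"
  using pi_def inf_closed by auto

lemma pi_ge: "a \<le> \<pi> a"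
  using pi_def by (auto intro: Inf_greatest)

lemma pi_least: "b \<in> L' \<Longrightarrow> a \<le> b \<Longrightarrow> \<pi> a \<le> b"
  using pi_def by (auto intro: Inf_lower)

lemma pi_mono: "a \<le> b \<Longrightarrow> \<pi> a \<le> \<pi> b"
  by (rule pi_least[OF pi_in order_trans[OF _ pi_ge]])

lemma pi_id: "a \<in> L' \<Longrightarrow> \<pi> a = a"
  by (rule order.antisym[OF pi_least[OF _ order_refl] pi_ge])

lemma top_in: "top \<in> L'"
  using inf_closed[rule_format, OF empty_subsetI] by simp

lemma lub_L': "is_lub_in L' A (\<pi> (Sup A))"
  unfolding is_lub_in_def
  by (auto intro: pi_in order_trans[OF Sup_upper pi_ge] pi_least Sup_least)

lemma sup_L': "sup_in L' A = \<pi> (Sup A)"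
  by (rule sup_in_eq[OF lub_L'])

lemma pi_Sup_pi: "\<pi> (Sup (\<pi> ` B)) = \<pi> (Sup B)"
proof (rule order.antisym)
  have "Sup (\<pi> ` B) \<le> \<pi> (Sup B)"
  proof (rule Sup_least)
    fix x assume "x \<in> \<pi> ` B"
    then obtain y where y: "y \<in> B" "x = \<pi> y" by blast
    have "y \<le> \<pi> (Sup B)" using y(1) by (rule order_trans[OF Sup_upper pi_ge])
    then show "x \<le> \<pi> (Sup B)" unfolding y(2) by (rule pi_least[OF pi_in])
  qed
  then show "\<pi> (Sup (\<pi> ` B)) \<le> \<pi> (Sup B)" by (rule pi_least[OF pi_in])
  show "\<pi> (Sup B) \<le> \<pi> (Sup (\<pi> ` B))"
    by (rule pi_mono, rule Sup_least, rule order_trans[OF pi_ge Sup_upper], rule imageI)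
qed

lemma pi_sup2: "\<pi> (sup x y) = \<pi> (sup (\<pi> x) (\<pi> y))"
  using pi_Sup_pi[of "{x, y}"] by simp

lemma key:
  assumes c: "compact_in UNIV c" and le: "c \<le> \<pi> (Sup A)"
  shows "\<exists>F. F \<subseteq> A \<and> finite F \<and> c \<le> \<pi> (Sup F)"
proof -
  define f where "f = (\<lambda>F. \<pi> (Sup F))"
  define D where "D = f ` {F. finite F \<and> F \<subseteq> A}"
  have DL: "D \<subseteq> L'" unfolding D_def f_def using pi_in by auto
  have fmono: "F \<subseteq> G \<Longrightarrow> f F \<le> f G" for F G unfolding f_def by (intro pi_mono Sup_subset_mono)
  have "directed_set D" unfolding directed_set_def
  proof
    show "D \<noteq> {}" unfolding D_def by auto
    show "\<forall>x\<in>D. \<forall>y\<in>D. \<exists>z\<in>D. x \<le> z \<and> y \<le> z"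
    proof (intro ballI)
      fix x y assume "x \<in> D" "y \<in> D"
      then obtain F G where FG: "finite F" "F \<subseteq> A" "x = f F" "finite G" "G \<subseteq> A" "y = f G"
        unfolding D_def by auto
      then have "f (F \<union> G) \<in> D" unfolding D_def by auto
      moreover have "x \<le> f (F \<union> G)" "y \<le> f (F \<union> G)" using FG fmono by auto
      ultimately show "\<exists>z\<in>D. x \<le> z \<and> y \<le> z" by blast
    qed
  qed
  then have SD: "Sup D \<in> L'" using dir_closed DL by blast
  have "Sup A \<le> Sup D"
  proof (rule Sup_least)
    fix x assume "x \<in> A"
    then have "f {x} \<in> D" unfolding D_def by auto
    moreover have "x \<le> f {x}" unfolding f_def using pi_ge[of x] by simp
    ultimately show "x \<le> Sup D" by (blast intro: order_trans[OF _ Sup_upper])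
  qed
  then have "\<pi> (Sup A) \<le> Sup D" using pi_least SD by blast
  then have "c \<le> Sup D" using le by simp
  then obtain D' where D': "D' \<subseteq> D" "finite D'" "c \<le> Sup D'"
    using c unfolding compact_univ by blast
  have "\<exists>C\<subseteq>{F. finite F \<and> F \<subseteq> A}. finite C \<and> D' = f ` C"
    using finite_subset_image[OF D'(2) D'(1)[unfolded D_def]] .
  then obtain C where C: "C \<subseteq> {F. finite F \<and> F \<subseteq> A}" "finite C" "D' = f ` C"
    by blast
  define G where "G = \<Union> C"
  have G: "finite G" "G \<subseteq> A" using C unfolding G_def by auto
  have "Sup D' \<le> f G" unfolding C(3) G_def
    by (auto intro!: Sup_least fmono)
  then have "c \<le> \<pi> (Sup G)" using D' unfolding f_def by simp
  then show ?thesis using G by blast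
qed

lemma compact_pi:
  assumes c: "compact_in UNIV c" shows "compact_in L' (\<pi> c)"
  unfolding compact_in_def sup_L'
proof (intro conjI allI impI pi_in)
  fix A assume "A \<subseteq> L'" and h: "\<pi> c \<le> \<pi> (Sup A)"
  have "c \<le> \<pi> (Sup A)" using pi_ge[of c] h by (rule order_trans)
  then obtain F where "F \<subseteq> A" "finite F" "c \<le> \<pi> (Sup F)" using key[OF c] by blast
  moreover have "\<pi> c \<le> \<pi> (Sup F)" using \<open>c \<le> \<pi> (Sup F)\<close> by (rule pi_least[OF pi_in])
  ultimately show "\<exists>A'\<subseteq>A. finite A' \<and> \<pi> c \<le> \<pi> (Sup A')"
    by blast
qed

lemma compact_rep:
  assumes a: "compact_in L' a" shows "\<exists>k. compact_in UNIV k \<and> a = \<pi> k"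
proof -
  have aL: "a \<in> L'" using a unfolding compact_in_def by auto
  obtain C where C: "\<forall>c\<in>C. compact_in UNIV c" "a = Sup C" using L2 by blast
  have eqa: "a = sup_in L' (\<pi> ` C)" unfolding sup_L' pi_Sup_pi using C pi_id aL by simp
  have sub: "\<pi> ` C \<subseteq> L'" using pi_in by auto
  have cpt: "\<forall>A. A \<subseteq> L' \<longrightarrow> a \<le> sup_in L' A \<longrightarrow> (\<exists>A'. A' \<subseteq> A \<and> finite A' \<and> a \<le> sup_in L' A')"
    using a unfolding compact_in_def by blast
  have "\<exists>A'. A' \<subseteq> \<pi> ` C \<and> finite A' \<and> a \<le> sup_in L' A'"
    using cpt[rule_format, OF sub order_eq_refl[OF eqa]] .
  then obtain A' where A': "A' \<subseteq> \<pi> ` C" "finite A'" "a \<le> sup_in L' A'"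
    by blast
  have "\<exists>C'\<subseteq>C. finite C' \<and> A' = \<pi> ` C'"
    using finite_subset_image[OF A'(2) A'(1)] .
  then obtain C' where C': "C' \<subseteq> C" "finite C'" "A' = \<pi> ` C'"
    by blast
  have k: "compact_in UNIV (Sup C')" using C' C by (intro finite_Sup_compact) auto
  have "a \<le> \<pi> (Sup C')" using A' C' pi_Sup_pi[of C'] unfolding sup_L' by simp
  moreover have "\<pi> (Sup C') \<le> a" using C C' aL by (intro pi_least) (auto intro: Sup_subset_mono)
  ultimately show ?thesis using k by (intro exI[of _ "Sup C'"]) auto
qed

lemma c1: "\<pi> (m x (\<pi> y)) = \<pi> (m x y)"
  by (rule conjunct1[OF spec[OF spec[OF compat, of x], of y]])
lemma c2: "\<pi> (m (\<pi> x) y) = \<pi> (m x y)"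
  by (rule sym[OF conjunct2[OF spec[OF spec[OF compat, of x], of y]]])

lemma SupL'_top: "sup_in L' L' = top"
proof -
  have "Sup L' = top" using Sup_upper[OF top_in] by (rule top_le)
  then show ?thesis unfolding sup_L' using pi_id top_in by simp
qed

lemma main: "ideal_lattice_on L' (\<lambda>a b. \<pi> (m a b))"
  unfolding ideal_lattice_on_def
proof (intro conjI ballI allI impI)
  fix a b assume "a \<in> L'" "b \<in> L'"
  show "\<pi> (m a b) \<in> L'" by (rule pi_in)
next
  fix a b c
  show "\<pi> (m (\<pi> (m a b)) c) = \<pi> (m a (\<pi> (m b c)))"
    unfolding c1 c2 m_assoc ..
next
  fix A :: "'a set" assume "A \<subseteq> L'"
  show "\<exists>x. is_lub_in L' A x" using lub_L' by blast
next
  fix a assume aL: "a \<in> L'"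
  obtain C where C: "\<forall>c\<in>C. compact_in UNIV c" "a = Sup C" using L2 by blast
  have "\<pi> ` C \<subseteq> L'" using pi_in by auto
  moreover have "\<forall>c\<in>\<pi> ` C. compact_in L' c" using C compact_pi by auto
  moreover have "a = sup_in L' (\<pi> ` C)" unfolding sup_L' pi_Sup_pi using C pi_id aL by simp
  ultimately show "\<exists>C. C \<subseteq> L' \<and> (\<forall>c\<in>C. compact_in L' c) \<and> a = sup_in L' C" by blast
next
  fix a b c
  show "\<pi> (m a (sup_in L' {b, c})) = sup_in L' {\<pi> (m a b), \<pi> (m a c)}"
    unfolding sup_L' Sup_insert Sup_empty sup_bot_right c1 m_distr
    by (rule pi_sup2)
  show "\<pi> (m (sup_in L' {b, c}) a) = sup_in L' {\<pi> (m b a), \<pi> (m c a)}"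
    unfolding sup_L' Sup_insert Sup_empty sup_bot_right c2 m_distr
    by (rule pi_sup2)
next
  show "compact_in L' (sup_in L' L')"
    unfolding SupL'_top using compact_pi[OF top_compact] pi_id[OF top_in] by simp
next
  fix a assume aL: "a \<in> L'"
  show "\<pi> (m (sup_in L' L') a) = a" unfolding SupL'_top m_top using pi_id aL by simp
  show "\<pi> (m a (sup_in L' L')) = a" unfolding SupL'_top m_top using pi_id aL by simp
next
  fix a b assume "a \<in> L'" "b \<in> L'" "compact_in L' a" "compact_in L' b"
  obtain k1 where k1: "compact_in UNIV k1" "a = \<pi> k1"
    using compact_rep[OF \<open>compact_in L' a\<close>] by blast
  obtain k2 where k2: "compact_in UNIV k2" "b = \<pi> k2"
    using compact_rep[OF \<open>compact_in L' b\<close>] by blast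
  note k = k1 k2
  have "\<pi> (m a b) = \<pi> (m k1 k2)" unfolding k c1 c2 ..
  then show "compact_in L' (\<pi> (m a b))" using compact_pi m_compact k by simp
qed

end

theorem mainTheorem12:
  fixes m :: "'a::complete_lattice \<Rightarrow> 'a \<Rightarrow> 'a"
    and L' :: "'a set"
    and \<pi> :: "'a \<Rightarrow> 'a"
  assumes L: "ideal_lattice_on (UNIV :: 'a set) m"
    and inf_closed: "\<forall>A. A \<subseteq> L' \<longrightarrow> Inf A \<in> L'"
    and dir_closed: "\<forall>A. A \<subseteq> L' \<longrightarrow> directed_set A \<longrightarrow> Sup A \<in> L'"
    and pi_def: "\<forall>a. \<pi> a = Inf {a' \<in> L'. a \<le> a'}"
    and compat: "\<forall>a b. \<pi> (m a (\<pi> b)) = \<pi> (m a b) \<and> \<pi> (m a b) = \<pi> (m (\<pi> a) b)"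
  shows "ideal_lattice_on L' (\<lambda>a b. \<pi> (m a b))"
proof -
  interpret ctx12 m L' \<pi> using assms by unfold_locales
  show ?thesis by (rule main)
qed

end
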